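(* Let $g_{GB}$ and $g_{GF}$ be independent random variables, where $g_{GB}=|h_{GB}|^2d_{GB}^{-\alpha}$ with $d_{GB}$ the distance to the origin of a point uniform in the disc $|z|\le R_1$, and $g_{GF}=|h_{GF}|^2d_{GF}^{-\alpha}$ with $d_{GF}$ the distance to the origin of a point uniform in the annulus $R_1\le|z|\le R_2$, the fading powers $|h_{GB}|^2,|h_{GF}|^2$ being exponential (means $\lambda_{GB},\lambda_{GF}$) and independent of the distances. Let $P_{GB},P_{GF},\sigma^2>0$, $\rho_{GB}=P_{GB}/\sigma^2$, $\rho_{GF}=P_{GF}/\sigma^2$, $\gamma_{th}^{GB}>0$, and define $$P^{GB,I}_{out,p_2}=\Pr\left\{\frac{\rho_{GB}g_{GB}}{\rho_{GF}g_{GF}+1}<\gamma_{th}^{GB},\ g_{GF}<\frac{P_{GB}}{P_{GF}}g_{GB}\right\}.$$ Let $F^{near}_{g_{GB}}$ be the CDF of $g_{GB}$ and $f^{far}_{g_{GF}}$ the density of $g_{GF}$. Then: (a) if $\gamma_{th}^{GB}>1$, $$P^{GB,I}_{out,p_2}=\int_0^\infty F^{near}_{g_{GB}}\!\left(\frac{\gamma_{th}^{GB}\rho_{GF}x+\gamma_{th}^{GB}}{\rho_{GB}}\right)f^{far}_{g_{GF}}(x)\,dx-\int_0^\infty F^{near}_{g_{GB}}\!\left(\frac{\rho_{GF}}{\rho_{GB}}x\right)f^{far}_{g_{GF}}(x)\,dx;$$ (b) if $\gamma_{th}^{GB}\le1$, then with $\sigma_1=\frac{\gamma_{th}^{GB}}{\rho_{GF}(1-\gamma_{th}^{GB})}$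 (interpreted as $\sigma_1=+\infty$ when $\gamma_{th}^{GB}=1$), $$P^{GB,I}_{out,p_2}=\int_0^{\sigma_1} F^{near}_{g_{GB}}\!\left(\frac{\gamma_{th}^{GB}\rho_{GF}x+\gamma_{th}^{GB}}{\rho_{GB}}\right)f^{far}_{g_{GF}}(x)\,dx-\int_0^{\sigma_1} F^{near}_{g_{GB}}\!\left(\frac{\rho_{GF}}{\rho_{GB}}x\right)f^{far}_{g_{GF}}(x)\,dx.$$
   Context: Setting ("Scenario I", dynamic protocol) of an uplink semi-grant-free NOMA pair: a grant-based (GB) user is the near user in a disc of radius $R_1$ around the base station at the origin and a grant-free (GF) user is the far user in the annulus between radii $R_1<R_2$; $\alpha>0$ is the path loss exponent, $\sigma^2$ the noise power, $P_{GB},P_{GF}$ transmit powers. The GF user is admitted only if $P_{GF}g_{GF}<P_{GB}g_{GB}$, and $P^{GB,I}_{out,p_2}$ is the outage probability of the GB user with target SINR $\gamma_{th}^{GB}$. *)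

theory Defs
  imports "HOL-Probability.Probability"
begin

definition annulus :: "real \<Rightarrow> real \<Rightarrow> complex set" where
  "annulus r1 r2 = {z. r1 \<le> cmod z \<and> cmod z \<le> r2}"

definition gain :: "real \<Rightarrow> ('a \<Rightarrow> real) \<Rightarrow> ('a \<Rightarrow> complex) \<Rightarrow> 'a \<Rightarrow> real" where
  "gain \<alpha> h z \<omega> = h \<omega> * cmod (z \<omega>) powr (- \<alpha>)"

end

theory Submission
  imports Defs
begin

lemma distr_lborel_borel: "distr M lborel X = distr M borel X"
  by (rule distr_cong) simp_all

lemma (in prob_space) indep_slice:
  fixes U V :: "'a \<Rightarrow> real"
  assumes ind: "indep_var borel V borel U" and S: "S \<in> sets (borel \<Otimes>\<^sub>M borel)"
  shows "emeasure M {\<omega>\<in>space M. (V \<omega>, U \<omega>) \<in> S} =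
     (\<integral>\<^sup>+v. emeasure (distr M borel U) (Pair v -` S) \<partial>(distr M borel V))"
proof -
  have rv: "random_variable borel V" "random_variable borel U"
    using ind by (auto dest: indep_var_rv1 indep_var_rv2)
  have eq: "distr M borel V \<Otimes>\<^sub>M distr M borel U = distr M (borel \<Otimes>\<^sub>M borel) (\<lambda>x. (V x, U x))"
    using ind indep_var_distribution_eq by blast
  interpret PU: prob_space "distr M borel U" by (rule prob_space_distr) (rule rv)
  have "{\<omega>\<in>space M. (V \<omega>, U \<omega>) \<in> S} = (\<lambda>x. (V x, U x)) -` S \<inter> space M" by auto
  then have "emeasure M {\<omega>\<in>space M. (V \<omega>, U \<omega>) \<in> S} = emeasure (distr M (borel \<Otimes>\<^sub>M borel) (\<lambda>x. (V x, U x))) S"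
    using rv S by (simp add: emeasure_distr)
  also have "\<dots> = emeasure (distr M borel V \<Otimes>\<^sub>M distr M borel U) S" by (simp add: eq)
  also have "\<dots> = (\<integral>\<^sup>+v. emeasure (distr M borel U) (Pair v -` S) \<partial>(distr M borel V))"
    by (rule PU.emeasure_pair_measure_alt) (use S in \<open>simp cong: sets_pair_measure_cong\<close>)
  finally show ?thesis .
qed

lemma (in prob_space) indep_from4:
  fixes Xs :: "nat \<Rightarrow> 'a \<Rightarrow> real"
  assumes ind: "indep_vars (\<lambda>_. borel) Xs {0,1,2,3}"
  shows "indep_var borel (\<lambda>\<omega>. Xs 1 \<omega> * Xs 3 \<omega> powr (-\<alpha>)) borel (\<lambda>\<omega>. Xs 0 \<omega> * Xs 2 \<omega> powr (-\<alpha>))"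
    and "indep_var borel (Xs 2) borel (Xs 0)"
proof -
  have "indep_var borel ((\<lambda>g. g 1 * g 3 powr (-\<alpha>)) \<circ> (\<lambda>\<omega>. restrict (\<lambda>i. Xs i \<omega>) {1,3}))
                  borel ((\<lambda>g. g 0 * g 2 powr (-\<alpha>)) \<circ> (\<lambda>\<omega>. restrict (\<lambda>i. Xs i \<omega>) {0,2}))"
    by (intro indep_var_compose[OF indep_var_restrict[OF ind]]) auto
  then show "indep_var borel (\<lambda>\<omega>. Xs 1 \<omega> * Xs 3 \<omega> powr (-\<alpha>)) borel (\<lambda>\<omega>. Xs 0 \<omega> * Xs 2 \<omega> powr (-\<alpha>))"
    by (simp add: comp_def)
  have "indep_var borel ((\<lambda>g. g 2) \<circ> (\<lambda>\<omega>. restrict (\<lambda>i. Xs i \<omega>) {2}))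
                  borel ((\<lambda>g. g 0) \<circ> (\<lambda>\<omega>. restrict (\<lambda>i. Xs i \<omega>) {0}))"
    by (intro indep_var_compose[OF indep_var_restrict[OF ind]]) auto
  then show "indep_var borel (Xs 2) borel (Xs 0)"
    by (simp add: comp_def)
qed

lemma (in prob_space) no_atom:
  fixes H D :: "'a \<Rightarrow> real"
  assumes ind: "indep_var borel D borel H"
    and dH: "distributed M lborel H g" and c: "0 < c"
  shows "emeasure M {\<omega>\<in>space M. H \<omega> * D \<omega> powr (-\<alpha>) = c} = 0"
proof -
  let ?S = "{p\<in>space (borel \<Otimes>\<^sub>M borel). snd p * fst p powr (-\<alpha>) = (c::real)}"
  have S: "?S \<in> sets (borel \<Otimes>\<^sub>M borel)" by measurable
  have "{\<omega>\<in>space M. H \<omega> * D \<omega> powr (-\<alpha>) = c} = {\<omega>\<in>space M. (D \<omega>, H \<omega>) \<in> ?S}" by (auto simp: space_pair_measure)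
  also have "emeasure M \<dots> = (\<integral>\<^sup>+v. emeasure (distr M borel H) (Pair v -` ?S) \<partial>(distr M borel D))"
    by (rule indep_slice[OF ind S])
  also have "\<dots> = (\<integral>\<^sup>+v. 0 \<partial>(distr M borel D))"
  proof (rule nn_integral_cong)
    fix v
    have g: "g \<in> borel_measurable lborel" using dH by (simp add: distributed_def)
    have sub: "Pair v -` ?S \<subseteq> {c / v powr (-\<alpha>)}"
      using c by (auto simp: field_simps)
    have "emeasure (distr M borel H) (Pair v -` ?S) \<le> emeasure (distr M borel H) {c / v powr (-\<alpha>)}"
      by (rule emeasure_mono[OF sub]) simp
    also have "\<dots> = emeasure (density lborel g) {c / v powr (-\<alpha>)}"
      using dH by (simp add: distributed_def distr_lborel_borel)
    also have "\<dots> = (\<integral>\<^sup>+ x. g x * indicator {c / v powr (-\<alpha>)} x \<partial>lborel)"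
      by (rule emeasure_density[OF g]) simp
    also have "\<dots> = (\<integral>\<^sup>+ x. 0 \<partial>(lborel::real measure))"
      using AE_lborel_singleton[of "c / v powr (-\<alpha>)"] by (intro nn_integral_cong_AE) (auto elim!: eventually_mono)
    finally show "emeasure (distr M borel H) (Pair v -` ?S) = 0" by simp
  qed
  finally show ?thesis by simp
qed


lemma (in prob_space) main_gen:
  fixes X Y :: "'a \<Rightarrow> real" and f :: "real \<Rightarrow> real" and \<sigma> :: ereal
  assumes ind: "indep_var borel Y borel X"
    and noatom: "\<And>c. 0 < c \<Longrightarrow> emeasure M {\<omega>\<in>space M. X \<omega> = c} = 0"
    and fpos: "\<And>x. 0 \<le> f x" and dY: "distributed M lborel Y (\<lambda>x. ennreal (f x))"
    and fneg: "AE y in lborel. y < 0 \<longrightarrow> f y = 0"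
    and pos: "0 < \<rho>B" "0 < \<rho>F" "0 < \<gamma>" and r: "r = \<rho>B / \<rho>F"
    and sig0: "0 \<le> \<sigma>" and sig: "\<And>y. 0 < y \<Longrightarrow> (ereal y < \<sigma>) = (\<rho>F / \<rho>B * y < (\<gamma> * \<rho>F * y + \<gamma>) / \<rho>B)"
  defines "F \<equiv> cdf (distr M lborel X)"
  shows "measure M {\<omega>\<in>space M. \<rho>B * X \<omega> / (\<rho>F * Y \<omega> + 1) < \<gamma> \<and> Y \<omega> < r * X \<omega>}
     = (LBINT y=0..\<sigma>. F ((\<gamma> * \<rho>F * y + \<gamma>) / \<rho>B) * f y) - (LBINT y=0..\<sigma>. F (\<rho>F / \<rho>B * y) * f y)"
proof -
  define a where "a y = (\<gamma> * \<rho>F * y + \<gamma>) / \<rho>B" for y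
  define b where "b y = \<rho>F / \<rho>B * y" for y
  define PX where "PX = distr M borel X"
  have rv: "random_variable borel Y" "random_variable borel X"
    using ind by (auto dest: indep_var_rv1 indep_var_rv2)
  interpret PX: real_distribution PX
    unfolding PX_def real_distribution_def real_distribution_axioms_def
    using rv by (auto intro: prob_space_distr)
  have FPX: "F = cdf PX" by (simp add: F_def PX_def distr_lborel_borel)
  have Fmono: "mono F" unfolding FPX by (auto intro: monoI PX.cdf_nondecreasing)
  have Fmeas[measurable]: "F \<in> borel_measurable borel" by (rule borel_measurable_mono[OF Fmono])
  have F01: "0 \<le> F x" "F x \<le> 1" for x unfolding FPX by (auto intro: PX.cdf_nonneg PX.cdf_bounded_prob)
  have dYe: "distr M borel Y = density lborel (\<lambda>x. ennreal (f x))"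
    using dY by (simp add: distributed_def distr_lborel_borel)
  have fmeasE: "(\<lambda>x. ennreal (f x)) \<in> borel_measurable lborel" using dY by (simp add: distributed_def)
  have fmeas[measurable]: "f \<in> borel_measurable lborel"
  proof -
    have "(\<lambda>x. enn2real (ennreal (f x))) \<in> borel_measurable lborel" using fmeasE by measurable
    then show ?thesis using fpos by simp
  qed
  have fmeasB[measurable]: "f \<in> borel_measurable borel" using fmeas by (simp add: measurable_lborel1)
  have fint: "integrable lborel f"
  proof (rule integrableI_nonneg)
    have "(\<integral>\<^sup>+x. f x \<partial>lborel) = emeasure (density lborel (\<lambda>x. ennreal (f x))) UNIV"
      using fmeasE by (simp add: emeasure_density)
    also have "\<dots> = emeasure (distr M borel Y) UNIV" by (simp add: dYe)
    also have "\<dots> = 1" using rv by (subst emeasure_distr) (auto simp: emeasure_space_1)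
    finally show "(\<integral>\<^sup>+x. f x \<partial>lborel) < \<infinity>" by simp
  qed (use fpos in auto)
  define S where "S = {p\<in>space (borel \<Otimes>\<^sub>M borel). \<rho>B * snd p / (\<rho>F * fst p + 1) < \<gamma> \<and> fst p < r * snd p}"
  have S[measurable]: "S \<in> sets (borel \<Otimes>\<^sub>M borel)" unfolding S_def by measurable
  have S': "S \<in> sets (lborel \<Otimes>\<^sub>M PX)" using S
    by (simp cong: sets_pair_measure_cong add: PX_def)
  have setEq: "{\<omega>\<in>space M. \<rho>B * X \<omega> / (\<rho>F * Y \<omega> + 1) < \<gamma> \<and> Y \<omega> < r * X \<omega>} = {\<omega>\<in>space M. (Y \<omega>, X \<omega>) \<in> S}"
    by (auto simp: S_def space_pair_measure)
  have slice: "Pair y -` S = {b y<..<a y}" if y: "0 < y" for y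
  proof -
    have d: "0 < \<rho>F * y + 1" using y pos by (simp add: add_pos_pos)
    have 1: "\<rho>B * x / (\<rho>F * y + 1) < \<gamma> \<longleftrightarrow> x < a y" for x
      using d pos by (simp add: a_def pos_divide_less_eq less_divide_eq field_simps)
    have 2: "y < r * x \<longleftrightarrow> b y < x" for x
      using pos by (simp add: b_def r field_simps)
    show ?thesis using 1 2 by (auto simp: S_def space_pair_measure)
  qed
  have atom: "emeasure PX {c} = 0" if "0 < c" for c
  proof -
    have "emeasure PX {c} = emeasure M (X -` {c} \<inter> space M)"
      unfolding PX_def using rv by (subst emeasure_distr) auto
    also have "X -` {c} \<inter> space M = {\<omega>\<in>space M. X \<omega> = c}" by auto
    finally show ?thesis using noatom[OF that] by simp
  qed
  have interval: "emeasure PX {u<..<v} = ennreal (F v - F u)" if uv: "u < v" "0 < v" for u v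
  proof -
    have "F v - F u = measure PX {u<..v}" unfolding FPX by (rule PX.cdf_diff_eq[OF uv(1)])
    also have "{u<..v} = {u<..<v} \<union> {v}" using uv by auto
    also have "measure PX \<dots> = measure PX {u<..<v} + measure PX {v}"
      by (rule PX.finite_measure_Union) auto
    also have "measure PX {v} = 0" using atom[OF uv(2)] by (simp add: PX.emeasure_eq_measure)
    finally show ?thesis by (simp add: PX.emeasure_eq_measure)
  qed
  have ameas[measurable]: "a \<in> borel_measurable borel" unfolding a_def by measurable
  have bmeas[measurable]: "b \<in> borel_measurable borel" unfolding b_def by measurable
  define h where "h y = indicator (einterval 0 \<sigma>) y * ((F (a y) - F (b y)) * f y)" for y
  have hmeasB: "h \<in> borel_measurable borel" unfolding h_def by measurable
  then have hmeas[measurable]: "h \<in> borel_measurable lborel" by (simp add: measurable_lborel1)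
  have ein: "y \<in> einterval 0 \<sigma> \<longleftrightarrow> 0 < y \<and> b y < a y" for y
    using sig[of y] by (auto simp: einterval_iff a_def b_def)
  have hnn: "0 \<le> h y" for y
  proof (cases "y \<in> einterval 0 \<sigma>")
    case True
    then have "b y \<le> a y" using ein by auto
    then have "F (b y) \<le> F (a y)" using Fmono by (auto dest: monoD)
    then show ?thesis using fpos[of y] by (simp add: h_def)
  qed (simp add: h_def)
  have hbound: "norm (h y) \<le> norm (f y)" for y
  proof -
    have "\<bar>F (a y) - F (b y)\<bar> \<le> 1" using F01[of "a y"] F01[of "b y"] by linarith
    then have "\<bar>F (a y) - F (b y)\<bar> * f y \<le> 1 * f y" using fpos[of y] by (intro mult_right_mono) auto
    then show ?thesis using fpos[of y]
      by (auto simp: h_def indicator_def abs_mult)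
  qed
  have hint: "integrable lborel h"
    by (rule Bochner_Integration.integrable_bound[OF fint]) (use hbound in \<open>auto intro!: AE_I2\<close>)
  have AEeq: "AE y in lborel. ennreal (f y) * emeasure PX (Pair y -` S) = ennreal (h y)"
    using fneg AE_lborel_singleton[of 0]
  proof eventually_elim
    case (elim y)
    show ?case
    proof (cases "y < 0")
      case True
      then show ?thesis using elim ein[of y] by (simp add: h_def)
    next
      case False
      then have y: "0 < y" using elim by simp
      show ?thesis
      proof (cases "b y < a y")
        case True
        have "0 < a y" using y pos by (simp add: a_def add_pos_pos)
        then have "emeasure PX (Pair y -` S) = ennreal (F (a y) - F (b y))"
          using True by (simp add: slice[OF y] interval)
        moreover have "0 \<le> F (a y) - F (b y)" using monoD[OF Fmono, of "b y" "a y"] True by simp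
        moreover have "h y = f y * (F (a y) - F (b y))" using y True ein[of y] by (simp add: h_def)
        ultimately show ?thesis using fpos[of y]
          by (simp add: ennreal_mult[symmetric])
      next
        case False
        then show ?thesis using y ein[of y] by (simp add: h_def slice[OF y])
      qed
    qed
  qed
  have "emeasure M {\<omega>\<in>space M. \<rho>B * X \<omega> / (\<rho>F * Y \<omega> + 1) < \<gamma> \<and> Y \<omega> < r * X \<omega>}
      = (\<integral>\<^sup>+y. emeasure PX (Pair y -` S) \<partial>(distr M borel Y))"
    unfolding setEq PX_def by (rule indep_slice[OF ind S])
  also have "\<dots> = (\<integral>\<^sup>+y. ennreal (f y) * emeasure PX (Pair y -` S) \<partial>lborel)"
    unfolding dYe by (rule nn_integral_density[OF fmeasE PX.measurable_emeasure_Pair[OF S']])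
  also have "\<dots> = (\<integral>\<^sup>+y. ennreal (h y) \<partial>lborel)"
    by (rule nn_integral_cong_AE[OF AEeq])
  also have "\<dots> = ennreal (integral\<^sup>L lborel h)"
    by (rule nn_integral_eq_integral[OF hint]) (simp add: hnn)
  finally have Pm: "measure M {\<omega>\<in>space M. \<rho>B * X \<omega> / (\<rho>F * Y \<omega> + 1) < \<gamma> \<and> Y \<omega> < r * X \<omega>}
      = integral\<^sup>L lborel h"
    using integral_nonneg_AE[of h lborel] hnn by (simp add: emeasure_eq_measure)
  have gint: "integrable lborel (\<lambda>y. F (c y) * f y)" if [measurable]: "c \<in> borel_measurable borel" for c
  proof (rule Bochner_Integration.integrable_bound[OF fint])
    show "(\<lambda>y. F (c y) * f y) \<in> borel_measurable lborel"
      by (simp add: measurable_lborel1)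
    show "AE x in lborel. norm (F (c x) * f x) \<le> norm (f x)"
    proof (intro AE_I2)
      fix x
      have "F (c x) * f x \<le> 1 * f x" using F01[of "c x"] fpos[of x] by (intro mult_right_mono) auto
      then show "norm (F (c x) * f x) \<le> norm (f x)" using F01[of "c x"] fpos[of x] by simp
    qed
  qed
  have iint: "interval_lebesgue_integrable lborel 0 \<sigma> (\<lambda>y. F (c y) * f y)" if [measurable]: "c \<in> borel_measurable borel" for c
    using sig0 integrable_mult_indicator[OF _ gint[OF that], of "einterval 0 \<sigma>"]
    unfolding interval_lebesgue_integrable_def set_integrable_def by simp
  have "(LBINT y=0..\<sigma>. F (a y) * f y) - (LBINT y=0..\<sigma>. F (b y) * f y)
      = (LBINT y=0..\<sigma>. F (a y) * f y - F (b y) * f y)"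
    by (rule interval_lebesgue_integral_diff(2)[symmetric, OF iint iint]) (rule ameas, rule bmeas)
  also have "\<dots> = integral\<^sup>L lborel h"
    using sig0 unfolding interval_lebesgue_integral_def set_lebesgue_integral_def
    by (simp, intro Bochner_Integration.integral_cong) (simp_all add: h_def algebra_simps)
  finally show ?thesis using Pm by (simp add: a_def b_def)
qed

theorem theorem1:
  fixes M :: "'a measure"
    and zGB zGF :: "'a \<Rightarrow> complex"
    and hGB hGF :: "'a \<Rightarrow> real"
    and f :: "real \<Rightarrow> real"
    and R1 R2 \<alpha> lamGB lamGF PGB PGF \<sigma>2 \<rho>GB \<rho>GF \<gamma> :: real
  assumes M: "prob_space M"
    and R: "0 < R1" "R1 < R2"
    and alpha: "0 < \<alpha>"
    and lam: "0 < lamGB" "0 < lamGF"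
    and pw: "0 < PGB" "0 < PGF" "0 < \<sigma>2"
    and gam: "0 < \<gamma>"
    and zGB: "zGB \<in> borel_measurable M" "distr M lborel zGB = uniform_measure lborel (cball 0 R1)"
    and zGF: "zGF \<in> borel_measurable M" "distr M lborel zGF = uniform_measure lborel (annulus R1 R2)"
    and hGB: "distributed M lborel hGB (exponential_density (1 / lamGB))"
    and hGF: "distributed M lborel hGF (exponential_density (1 / lamGF))"
    and indep: "prob_space.indep_vars M (\<lambda>_. borel)
       (\<lambda>i::nat. if i = 0 then hGB else if i = 1 then hGF
                 else if i = 2 then (\<lambda>\<omega>. cmod (zGB \<omega>)) else (\<lambda>\<omega>. cmod (zGF \<omega>))) {0, 1, 2, 3}"
    and dens: "\<And>x. 0 \<le> f x"
      "distributed M lborel (gain \<alpha> hGF zGF) (\<lambda>x. ennreal (f x))"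
    and rho: "\<rho>GB = PGB / \<sigma>2" "\<rho>GF = PGF / \<sigma>2"
  defines "F \<equiv> cdf (distr M lborel (gain \<alpha> hGB zGB))"
    and "Pout \<equiv> measure M {\<omega> \<in> space M. \<rho>GB * gain \<alpha> hGB zGB \<omega> / (\<rho>GF * gain \<alpha> hGF zGF \<omega> + 1) < \<gamma>
                                         \<and> gain \<alpha> hGF zGF \<omega> < PGB / PGF * gain \<alpha> hGB zGB \<omega>}"
    and "\<sigma>1 \<equiv> (if \<gamma> = 1 then PInfty else ereal (\<gamma> / (\<rho>GF * (1 - \<gamma>))))"
  shows "(1 < \<gamma> \<longrightarrow>
            Pout = (LBINT x=0..\<infinity>. F ((\<gamma> * \<rho>GF * x + \<gamma>) / \<rho>GB) * f x)
                 - (LBINT x=0..\<infinity>. F (\<rho>GF / \<rho>GB * x) * f x))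
       \<and> (\<gamma> \<le> 1 \<longrightarrow>
            Pout = (LBINT x=0..\<sigma>1. F ((\<gamma> * \<rho>GF * x + \<gamma>) / \<rho>GB) * f x)
                 - (LBINT x=0..\<sigma>1. F (\<rho>GF / \<rho>GB * x) * f x))"
proof -
  interpret prob_space M by (rule M)
  define X where "X = gain \<alpha> hGB zGB"
  define Y where "Y = gain \<alpha> hGF zGF"
  have pos: "0 < \<rho>GB" "0 < \<rho>GF" using rho pw by auto
  have r: "PGB / PGF = \<rho>GB / \<rho>GF" unfolding rho using pw by simp
  let ?Xs = "\<lambda>i::nat. if i = 0 then hGB else if i = 1 then hGF
                 else if i = 2 then (\<lambda>\<omega>. cmod (zGB \<omega>)) else (\<lambda>\<omega>. cmod (zGF \<omega>))"
  have i1: "indep_var borel (\<lambda>\<omega>. ?Xs 1 \<omega> * ?Xs 3 \<omega> powr (-\<alpha>)) borel (\<lambda>\<omega>. ?Xs 0 \<omega> * ?Xs 2 \<omega> powr (-\<alpha>))"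
    by (rule indep_from4(1)[OF indep])
  have ind: "indep_var borel Y borel X"
    using i1 by (simp add: X_def Y_def gain_def[abs_def])
  have i2: "indep_var borel (?Xs 2) borel (?Xs 0)"
    by (rule indep_from4(2)[OF indep])
  have ind2: "indep_var borel (\<lambda>\<omega>. cmod (zGB \<omega>)) borel hGB"
    using i2 by simp
  have noatom: "emeasure M {\<omega>\<in>space M. X \<omega> = c} = 0" if "0 < c" for c
    using no_atom[OF ind2 hGB that, of \<alpha>] by (simp add: X_def gain_def)
  have hGFm: "hGF \<in> borel_measurable M" using hGF by (simp add: distributed_def)
  have Ym: "Y \<in> borel_measurable M"
  proof -
    have "zGF \<in> borel_measurable M" by (rule zGF(1))
    then show ?thesis unfolding Y_def gain_def[abs_def] using hGFm by measurable
  qed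
  have fneg: "AE y in lborel. y < 0 \<longrightarrow> f y = 0"
  proof -
    have fmeasE: "(\<lambda>x. ennreal (f x)) \<in> borel_measurable lborel" using dens(2) by (simp add: distributed_def)
    have "emeasure (density lborel (\<lambda>x. ennreal (f x))) {..<0} = emeasure (distr M lborel Y) {..<0}"
      using dens(2) by (simp add: distributed_def Y_def)
    also have "\<dots> = emeasure M (Y -` {..<0} \<inter> space M)"
      using Ym by (subst emeasure_distr) auto
    also have "\<dots> \<le> emeasure M (hGF -` {..<0} \<inter> space M)"
    proof (rule emeasure_mono)
      show "Y -` {..<0} \<inter> space M \<subseteq> hGF -` {..<0} \<inter> space M"
      proof -
        have "hGF \<omega> < 0" if "Y \<omega> < 0" for \<omega>
        proof -
          have "hGF \<omega> * cmod (zGF \<omega>) powr (-\<alpha>) < 0" using that by (simp add: Y_def gain_def)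
          moreover have "0 \<le> cmod (zGF \<omega>) powr (-\<alpha>)" by simp
          ultimately show ?thesis by (auto simp: mult_less_0_iff)
        qed
        then show ?thesis by auto
      qed
      show "hGF -` {..<0} \<inter> space M \<in> sets M" using hGFm by measurable
    qed
    also have "\<dots> = emeasure (distr M lborel hGF) {..<0}"
      using hGFm by (subst emeasure_distr) auto
    also have "\<dots> = 0"
    proof -
      have z: "ennreal (if x < 0 then 0 else c) * of_bool (x < 0) = 0" for x c :: real by auto
      show ?thesis
        using hGF by (simp add: distributed_def emeasure_density exponential_density_def indicator_def z)
    qed
    finally have "emeasure (density lborel (\<lambda>x. ennreal (f x))) {..<0} = 0" by simp
    then have "(\<integral>\<^sup>+ x. ennreal (f x) * indicator {..<0} x \<partial>lborel) = 0"
      using fmeasE by (simp add: emeasure_density)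
    then have "AE x in lborel. ennreal (f x) * indicator {..<0} x = 0"
      using fmeasE by (subst (asm) nn_integral_0_iff_AE) auto
    then show ?thesis by (rule eventually_mono) (use dens(1) in \<open>auto simp: indicator_def\<close>)
  qed
  have main: "Pout = (LBINT y=0..s. F ((\<gamma> * \<rho>GF * y + \<gamma>) / \<rho>GB) * f y) - (LBINT y=0..s. F (\<rho>GF / \<rho>GB * y) * f y)"
    if s0: "0 \<le> s" and s: "\<And>y. 0 < y \<Longrightarrow> (ereal y < s) = (\<rho>GF / \<rho>GB * y < (\<gamma> * \<rho>GF * y + \<gamma>) / \<rho>GB)" for s
    unfolding Pout_def F_def
    using main_gen[OF ind noatom dens(1) dens(2)[folded Y_def] fneg pos gam r s0 s]
    by (simp add: X_def Y_def)
  show ?thesis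
  proof (intro conjI impI)
    assume g: "1 < \<gamma>"
    show "Pout = (LBINT x=0..\<infinity>. F ((\<gamma> * \<rho>GF * x + \<gamma>) / \<rho>GB) * f x)
                 - (LBINT x=0..\<infinity>. F (\<rho>GF / \<rho>GB * x) * f x)"
    proof (rule main)
      fix y :: real assume y: "0 < y"
      have "\<rho>GF * y < \<gamma> * \<rho>GF * y + \<gamma>"
      proof -
        have p: "0 < \<rho>GF * y" using pos y by simp
        have "1 * (\<rho>GF * y) < \<gamma> * (\<rho>GF * y)" by (rule mult_strict_right_mono[OF g p])
        then show ?thesis using gam by (simp add: mult.assoc)
      qed
      then show "(ereal y < \<infinity>) = (\<rho>GF / \<rho>GB * y < (\<gamma> * \<rho>GF * y + \<gamma>) / \<rho>GB)"
        using pos by (simp add: divide_strict_right_mono)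
    qed simp
  next
    assume g: "\<gamma> \<le> 1"
    show "Pout = (LBINT x=0..\<sigma>1. F ((\<gamma> * \<rho>GF * x + \<gamma>) / \<rho>GB) * f x)
                 - (LBINT x=0..\<sigma>1. F (\<rho>GF / \<rho>GB * x) * f x)"
    proof (rule main)
      show "0 \<le> \<sigma>1" using g gam pos by (simp add: \<sigma>1_def)
    next
      fix y :: real assume y: "0 < y"
      have eq: "(\<rho>GF / \<rho>GB * y < (\<gamma> * \<rho>GF * y + \<gamma>) / \<rho>GB) \<longleftrightarrow> \<rho>GF * y < \<gamma> * \<rho>GF * y + \<gamma>"
        using pos by (simp add: field_simps)
      show "(ereal y < \<sigma>1) = (\<rho>GF / \<rho>GB * y < (\<gamma> * \<rho>GF * y + \<gamma>) / \<rho>GB)"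
      proof (cases "\<gamma> = 1")
        case True
        then show ?thesis unfolding eq by (simp add: \<sigma>1_def)
      next
        case False
        then have g1: "0 < 1 - \<gamma>" using g by simp
        have "y < \<gamma> / (\<rho>GF * (1 - \<gamma>)) \<longleftrightarrow> y * (\<rho>GF * (1 - \<gamma>)) < \<gamma>"
          using g1 pos by (simp add: less_divide_eq)
        also have "\<dots> \<longleftrightarrow> \<rho>GF * y < \<gamma> * \<rho>GF * y + \<gamma>" by (simp add: algebra_simps)
        finally show ?thesis unfolding eq using False by (simp add: \<sigma>1_def)
      qed
    qed
  qed
qed

end
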